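(* For every $\alpha\in(0,1)$, every set of $m$ statistical queries $\mathcal{Q}$ over a universe $U$ of size $N$ with query matrix $Q\in[0,1]^{m\times N}$, and every $n\in\mathbb{N}$, there exists \[ s=\frac5\alpha\cdot\mathrm{hdisc}^*(Q,n) \] such that for every dataset $x\in U^n$ whose elements are all distinct, there exists a dataset $y\in U^*$ of size at most $s$ with $\|\mathcal{Q}(x)-\mathcal{Q}(y)\|_\infty\le\alpha$.
   Context: A statistical query is $q:U\to\mathbb{R}$ with $q(x)=\frac1{|x|}\sum_{i}q(x_i)$ for a dataset $x$ (a finite sequence of elements of $U$); $\mathcal{Q}(x)=(q_1(x),\ldots,q_m(x))$; the query matrix has $i$-th row $(q_i(u))_{u\in U}$. $U^*$ denotes finite sequences over $U$. For an $m\times N$ matrix $Q$, $Q^*$ is the $(m+1)\times N$ matrix obtained by appending the all-ones row, $Q^*_S$ is its submatrix of columns in $S$, and $\mathrm{hdisc}^*(Q,w)=\max_{S\subseteq[N],|S|\le w}\min_{z\in\{\pm1\}^S}\|Q^*_Sz\|_\infty$. *)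

theory Defs
  imports Complex_Main "HOL-Library.FuncSet"
begin

definition sq_eval :: "('u \<Rightarrow> real) \<Rightarrow> 'u list \<Rightarrow> real" where
  "sq_eval q xs = (\<Sum>u\<leftarrow>xs. q u) / real (length xs)"

definition Qstar :: "nat \<Rightarrow> (nat \<Rightarrow> 'u \<Rightarrow> real) \<Rightarrow> nat \<Rightarrow> 'u \<Rightarrow> real" where
  "Qstar m q i u = (if i < m then q i u else 1)"

definition disc_star :: "nat \<Rightarrow> (nat \<Rightarrow> 'u \<Rightarrow> real) \<Rightarrow> 'u set \<Rightarrow> real" where
  "disc_star m q S =
     Min ((\<lambda>z. Max ((\<lambda>i. \<bar>\<Sum>u\<in>S. Qstar m q i u * z u\<bar>) ` {..m}))
          ` (S \<rightarrow>\<^sub>E {-1, 1}))"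

definition hdisc_star :: "nat \<Rightarrow> (nat \<Rightarrow> 'u::finite \<Rightarrow> real) \<Rightarrow> nat \<Rightarrow> real" where
  "hdisc_star m q w = Max (disc_star m q ` {S. card S \<le> w})"

end

theory Submission
  imports Defs
begin

definition avg :: "(nat \<Rightarrow> 'u \<Rightarrow> real) \<Rightarrow> nat \<Rightarrow> 'u set \<Rightarrow> real" where
  "avg q i A = (\<Sum>u\<in>A. q i u) / real (card A)"

lemma step_bound:
  fixes p r D sP sM :: real
  assumes "0 < p" "r \<le> p" "0 \<le> r" "\<bar>p - r\<bar> \<le> D" "\<bar>sP - sM\<bar> \<le> D" "0 \<le> sP" "sP \<le> p"
  shows "\<bar>(sP + sM) / (p + r) - sP / p\<bar> \<le> 2 * D / (p + r)"
proof -
  have pr: "0 < p + r" using assms(1,3) by linarith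
  have eq: "(sP + sM) / (p + r) - sP / p = (p * (sM - sP) + (p - r) * sP) / (p * (p + r))"
    using assms(1) pr by (simp add: field_simps)
  have D0: "0 \<le> D" using assms(4) by linarith
  have a: "\<bar>p * (sM - sP)\<bar> \<le> p * D"
  proof -
    have "\<bar>p * (sM - sP)\<bar> = p * \<bar>sM - sP\<bar>" using assms(1) by (simp add: abs_mult)
    also have "\<dots> \<le> p * D" using assms(1,5) by (intro mult_left_mono) (auto simp: abs_minus_commute)
    finally show ?thesis .
  qed
  have b: "\<bar>(p - r) * sP\<bar> \<le> p * D"
  proof -
    have "\<bar>(p - r) * sP\<bar> = \<bar>p - r\<bar> * sP" using assms(6) by (simp add: abs_mult)
    also have "\<dots> \<le> D * p" using assms(4,6,7) D0 by (intro mult_mono) auto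
    also have "\<dots> = p * D" by (rule mult.commute)
    finally show ?thesis .
  qed
  have c: "\<bar>p * (sM - sP) + (p - r) * sP\<bar> \<le> p * D + p * D"
    using a b abs_triangle_ineq[of "p * (sM - sP)" "(p - r) * sP"] by linarith
  have pos: "0 < p * (p + r)" using assms(1) pr by simp
  have "\<bar>(sP + sM) / (p + r) - sP / p\<bar> = \<bar>p * (sM - sP) + (p - r) * sP\<bar> / (p * (p + r))"
    unfolding eq by (rule abs_div_pos[OF pos, symmetric])
  also have "\<dots> \<le> (p * D + p * D) / (p * (p + r))"
    using c pos by (intro divide_right_mono) simp_all
  also have "\<dots> = (2 * D) * p / (p * (p + r))" by (simp add: algebra_simps)
  also have "\<dots> = 2 * D / (p + r)" using assms(1) by simp
  finally show ?thesis .
qed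

lemma disc_obtain:
  fixes q :: "nat \<Rightarrow> 'u::finite \<Rightarrow> real"
  assumes "disc_star m q S \<le> D"
  obtains z where "z \<in> S \<rightarrow>\<^sub>E {-1, 1}" "\<And>i. i \<le> m \<Longrightarrow> \<bar>\<Sum>u\<in>S. Qstar m q i u * z u\<bar> \<le> D"
proof -
  let ?F = "S \<rightarrow>\<^sub>E ({-1, 1} :: real set)"
  let ?f = "\<lambda>z. Max ((\<lambda>i. \<bar>\<Sum>u\<in>S. Qstar m q i u * z u\<bar>) ` {..m})"
  have fin: "finite ?F" by (intro finite_PiE) auto
  have ne: "?F \<noteq> {}" by (simp add: PiE_eq_empty_iff)
  have "Min (?f ` ?F) \<in> ?f ` ?F" using fin ne by (intro Min_in) auto
  then obtain z where z: "z \<in> ?F" "?f z = Min (?f ` ?F)" by auto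
  have "?f z \<le> D" using z assms unfolding disc_star_def by simp
  moreover have "\<And>i. i \<le> m \<Longrightarrow> \<bar>\<Sum>u\<in>S. Qstar m q i u * z u\<bar> \<le> ?f z"
    by (intro Max_ge) auto
  ultimately show ?thesis using that z(1) by force
qed

lemma disc_nonneg:
  fixes q :: "nat \<Rightarrow> 'u::finite \<Rightarrow> real"
  shows "0 \<le> disc_star m q S"
proof -
  let ?F = "S \<rightarrow>\<^sub>E ({-1, 1} :: real set)"
  let ?f = "\<lambda>z. Max ((\<lambda>i. \<bar>\<Sum>u\<in>S. Qstar m q i u * z u\<bar>) ` {..m})"
  have fin: "finite ?F" by (intro finite_PiE) auto
  have ne: "?F \<noteq> {}" by (simp add: PiE_eq_empty_iff)
  have "\<forall>z. 0 \<le> ?f z"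
  proof
    fix z
    have "\<bar>\<Sum>u\<in>S. Qstar m q 0 u * z u\<bar> \<le> ?f z" by (intro Max_ge) auto
    thus "0 \<le> ?f z" by linarith
  qed
  hence "\<forall>v \<in> ?f ` ?F. 0 \<le> v" by auto
  thus ?thesis unfolding disc_star_def using fin ne by (subst Min_ge_iff) auto
qed

lemma disc_le_hdisc:
  fixes q :: "nat \<Rightarrow> 'u::finite \<Rightarrow> real"
  assumes "card S \<le> n"
  shows "disc_star m q S \<le> hdisc_star m q n"
  unfolding hdisc_star_def using assms by (intro Max_ge) auto



lemma halve:
  fixes q :: "nat \<Rightarrow> 'u::finite \<Rightarrow> real"
  assumes bnd: "\<forall>i<m. \<forall>u. 0 \<le> q i u \<and> q i u \<le> 1"
    and disc: "disc_star m q S \<le> D" and ne: "S \<noteq> {}"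
  shows "\<exists>P \<subseteq> S. real (card S) / 2 \<le> real (card P) \<and> real (card P) \<le> (real (card S) + D) / 2
           \<and> (\<forall>i<m. \<bar>avg q i S - avg q i P\<bar> \<le> 2 * D / real (card S))"
proof -
  obtain z where z: "z \<in> S \<rightarrow>\<^sub>E {-1, 1}"
    and zb: "\<And>i. i \<le> m \<Longrightarrow> \<bar>\<Sum>u\<in>S. Qstar m q i u * z u\<bar> \<le> D"
    using disc_obtain[OF disc] by blast
  define A where "A = S \<inter> {u. z u = 1}"
  define B where "B = S - {u. z u = 1}"
  have fS: "finite S" by simp
  have AB: "A \<inter> B = {}" "A \<union> B = S" unfolding A_def B_def by auto
  have zB: "\<And>u. u \<in> B \<Longrightarrow> z u = -1" using z unfolding B_def by (auto simp: PiE_def Pi_def)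
  have spl: "(\<Sum>u\<in>S. f u * z u) = (\<Sum>u\<in>A. f u) - (\<Sum>u\<in>B. f u)" for f :: "'u \<Rightarrow> real"
  proof -
    have "(\<Sum>u\<in>S. f u * z u) = (\<Sum>u\<in>A. f u * z u) + (\<Sum>u\<in>B. f u * z u)"
      unfolding A_def B_def using fS by (rule sum.Int_Diff)
    also have "(\<Sum>u\<in>A. f u * z u) = (\<Sum>u\<in>A. f u)" by (rule sum.cong) (auto simp: A_def)
    also have "(\<Sum>u\<in>B. f u * z u) = (\<Sum>u\<in>B. - f u)" by (rule sum.cong) (auto simp: zB)
    finally show ?thesis by (simp add: sum_negf)
  qed
  have cardD: "\<bar>real (card A) - real (card B)\<bar> \<le> D"
    using zb[of m] spl[of "Qstar m q m"] by (simp add: Qstar_def)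
  have qD: "\<bar>(\<Sum>u\<in>A. q i u) - (\<Sum>u\<in>B. q i u)\<bar> \<le> D" if "i < m" for i
  proof -
    have "(\<Sum>u\<in>S. Qstar m q i u * z u) = (\<Sum>u\<in>S. q i u * z u)" using that by (simp add: Qstar_def)
    thus ?thesis using zb[of i] spl[of "q i"] that by simp
  qed
  have gen: "\<exists>P \<subseteq> S. real (card S) / 2 \<le> real (card P) \<and> real (card P) \<le> (real (card S) + D) / 2
           \<and> (\<forall>i<m. \<bar>avg q i S - avg q i P\<bar> \<le> 2 * D / real (card S))"
    if XY: "X \<inter> Y = {}" "X \<union> Y = S" and cD: "\<bar>real (card X) - real (card Y)\<bar> \<le> D"
      and sD: "\<forall>i<m. \<bar>(\<Sum>u\<in>X. q i u) - (\<Sum>u\<in>Y. q i u)\<bar> \<le> D"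
      and le: "card Y \<le> card X" for X Y
  proof (intro exI conjI allI impI)
    have fX: "finite X" "finite Y" by simp_all
    have cS: "card S = card X + card Y" using XY fX card_Un_disjoint by metis
    have cS0: "card S > 0" using ne fS by auto
    have cX0: "card X > 0" using cS cS0 le by linarith
    show "X \<subseteq> S" using XY by auto
    show "real (card S) / 2 \<le> real (card X)" using cS le by simp
    show "real (card X) \<le> (real (card S) + D) / 2" using cS cD by simp
    fix i assume i: "i < m"
    have sumS: "(\<Sum>u\<in>S. q i u) = (\<Sum>u\<in>X. q i u) + (\<Sum>u\<in>Y. q i u)"
      using XY fX by (metis sum.union_disjoint)
    have s0: "0 \<le> (\<Sum>u\<in>X. q i u)" using bnd i by (intro sum_nonneg) auto
    have s1: "(\<Sum>u\<in>X. q i u) \<le> real (card X)"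
    proof -
      have "(\<Sum>u\<in>X. q i u) \<le> (\<Sum>u\<in>X. 1)" using bnd i by (intro sum_mono) auto
      thus ?thesis by simp
    qed
    have "\<bar>((\<Sum>u\<in>X. q i u) + (\<Sum>u\<in>Y. q i u)) / (real (card X) + real (card Y)) - (\<Sum>u\<in>X. q i u) / real (card X)\<bar>
          \<le> 2 * D / (real (card X) + real (card Y))"
      using cX0 le cD sD i s0 s1 by (intro step_bound) auto
    thus "\<bar>avg q i S - avg q i X\<bar> \<le> 2 * D / real (card S)"
      unfolding avg_def using sumS cS by simp
  qed
  show ?thesis
  proof (cases "card B \<le> card A")
    case True
    show ?thesis using AB cardD qD True by (intro gen[of A B]) auto
  next
    case False
    have "\<forall>i<m. \<bar>(\<Sum>u\<in>B. q i u) - (\<Sum>u\<in>A. q i u)\<bar> \<le> D" using qD by (simp add: abs_minus_commute)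
    thus ?thesis using AB cardD False by (intro gen[of B A]) (auto simp: abs_minus_commute)
  qed
qed


lemma main_ind:
  fixes q :: "nat \<Rightarrow> 'u::finite \<Rightarrow> real"
  assumes bnd: "\<forall>i<m. \<forall>u. 0 \<le> q i u \<and> q i u \<le> 1"
    and a0: "0 < \<alpha>" and a1: "\<alpha> < 1" and D0: "0 \<le> D"
    and dD: "\<forall>S::'u set. card S \<le> n \<longrightarrow> disc_star m q S \<le> D"
  shows "\<forall>S::'u set. card S = k \<and> 1 \<le> k \<and> k \<le> n \<longrightarrow>
    (\<exists>T\<subseteq>S. T \<noteq> {} \<and> real (card T) \<le> 5 / \<alpha> * D \<and>
      (\<forall>i<m. \<bar>avg q i S - avg q i T\<bar> \<le> (if real k \<le> 5 / \<alpha> * D then 0 else \<alpha> - 3 * D / real k)))"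
proof (induction k rule: less_induct)
  case (less k)
  show ?case
  proof (intro allI impI)
    fix S :: "'u set"
    assume S: "card S = k \<and> 1 \<le> k \<and> k \<le> n"
    have Sne: "S \<noteq> {}" using S by auto
    show "\<exists>T\<subseteq>S. T \<noteq> {} \<and> real (card T) \<le> 5 / \<alpha> * D \<and>
      (\<forall>i<m. \<bar>avg q i S - avg q i T\<bar> \<le> (if real k \<le> 5 / \<alpha> * D then 0 else \<alpha> - 3 * D / real k))"
    proof (cases "real k \<le> 5 / \<alpha> * D")
      case True
      thus ?thesis using S Sne by (intro exI[of _ S]) auto
    next
      case False
      have big: "5 * D < \<alpha> * real k"
      proof -
        have "5 / \<alpha> * D < real k" using False by simp
        hence "5 * D / \<alpha> < real k" by simp
        thus ?thesis using a0 by (simp add: divide_less_eq mult.commute)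
      qed
      have "\<alpha> * real k \<le> real k" using a0 a1 by (intro mult_left_le_one_le) auto
      hence Dk: "5 * D < real k" using big by linarith
      have kpos: "0 < real k" using S by simp
      obtain P where P: "P \<subseteq> S" "real (card S) / 2 \<le> real (card P)"
          "real (card P) \<le> (real (card S) + D) / 2"
          "\<forall>i<m. \<bar>avg q i S - avg q i P\<bar> \<le> 2 * D / real (card S)"
        using halve[OF bnd dD[rule_format] Sne] S by auto
      define k' where "k' = card P"
      have k'1: "real k / 2 \<le> real k'" using P S k'_def by simp
      have k'2: "5 * real k' \<le> 3 * real k" using P(3) S k'_def Dk by simp
      have k'pos: "1 \<le> k'" using k'1 kpos by linarith
      have k'lt: "k' < k" using k'2 kpos by linarith
      have k'n: "k' \<le> n" using k'lt S by simp
      obtain T where T: "T \<subseteq> P" "T \<noteq> {}" "real (card T) \<le> 5 / \<alpha> * D"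
        "\<forall>i<m. \<bar>avg q i P - avg q i T\<bar> \<le> (if real k' \<le> 5 / \<alpha> * D then 0 else \<alpha> - 3 * D / real k')"
        using less.IH[OF k'lt] k'pos k'n k'_def by blast
      have target: "2 * D / real k + (if real k' \<le> 5 / \<alpha> * D then 0 else \<alpha> - 3 * D / real k')
                    \<le> \<alpha> - 3 * D / real k"
      proof (cases "real k' \<le> 5 / \<alpha> * D")
        case True
        have "5 * D / real k \<le> \<alpha>" using big kpos by (simp add: divide_le_eq mult.commute)
        hence "2 * D / real k + 3 * D / real k \<le> \<alpha>" by (simp add: add_divide_distrib[symmetric])
        thus ?thesis using True by simp
      next
        case False
        have k'p: "0 < real k'" using k'pos by simp
        have "5 * D * real k' \<le> 3 * D * real k" using k'2 D0
          by (metis mult.assoc mult.left_commute mult_left_mono)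
        hence "5 * D / real k \<le> 3 * D / real k'" using kpos k'p by (simp add: field_simps)
        hence "2 * D / real k + 3 * D / real k \<le> 3 * D / real k'" by (simp add: add_divide_distrib[symmetric])
        thus ?thesis using False by simp
      qed
      show ?thesis
      proof (intro exI[of _ T] conjI allI impI)
        show "T \<subseteq> S" using T P by auto
        show "T \<noteq> {}" "real (card T) \<le> 5 / \<alpha> * D" using T by auto
        fix i assume i: "i < m"
        have "\<bar>avg q i S - avg q i T\<bar> \<le> \<bar>avg q i S - avg q i P\<bar> + \<bar>avg q i P - avg q i T\<bar>"
          by linarith
        also have "\<dots> \<le> 2 * D / real k + (if real k' \<le> 5 / \<alpha> * D then 0 else \<alpha> - 3 * D / real k')"
          using P(4) T(4) i S by (intro add_mono) auto
        also have "\<dots> \<le> \<alpha> - 3 * D / real k" by (rule target)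
        finally show "\<bar>avg q i S - avg q i T\<bar> \<le> (if real k \<le> 5 / \<alpha> * D then 0 else \<alpha> - 3 * D / real k)"
          using False by simp
      qed
    qed
  qed
qed


lemma sq_eval_avg:
  assumes "distinct xs"
  shows "sq_eval (q i) xs = avg q i (set xs)"
  unfolding sq_eval_def avg_def using assms
  by (simp add: sum_list_distinct_conv_sum_set distinct_card)

theorem theorem6p8:
  fixes \<alpha> :: real and m n :: nat and q :: "nat \<Rightarrow> 'u::finite \<Rightarrow> real"
  assumes "0 < \<alpha>" and "\<alpha> < 1"
    and "\<forall>i<m. \<forall>u. 0 \<le> q i u \<and> q i u \<le> 1"
    and "1 \<le> n"
  shows "\<forall>x :: 'u list. length x = n \<and> distinct x \<longrightarrow>
           (\<exists>y :: 'u list. y \<noteq> [] \<and> real (length y) \<le> 5 / \<alpha> * hdisc_star m q n \<and>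
              (\<forall>i<m. \<bar>sq_eval (q i) x - sq_eval (q i) y\<bar> \<le> \<alpha>))"
proof (intro allI impI)
  fix x :: "'u list"
  assume x: "length x = n \<and> distinct x"
  define D where "D = hdisc_star m q n"
  have D0: "0 \<le> D"
  proof -
    have "0 \<le> disc_star m q ({} :: 'u set)" by (rule disc_nonneg)
    also have "\<dots> \<le> D" unfolding D_def by (rule disc_le_hdisc) simp
    finally show ?thesis .
  qed
  have dD: "\<forall>S::'u set. card S \<le> n \<longrightarrow> disc_star m q S \<le> D"
    unfolding D_def using disc_le_hdisc by blast
  have cx: "card (set x) = n" using x by (simp add: distinct_card)
  obtain T where T: "T \<subseteq> set x" "T \<noteq> {}" "real (card T) \<le> 5 / \<alpha> * D"
    "\<forall>i<m. \<bar>avg q i (set x) - avg q i T\<bar> \<le> (if real n \<le> 5 / \<alpha> * D then 0 else \<alpha> - 3 * D / real n)"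
    using main_ind[OF assms(3) assms(1) assms(2) D0 dD, of n] cx assms(4) by blast
  obtain y where y: "set y = T" "distinct y" using finite_distinct_list[of T] by auto
  show "\<exists>y :: 'u list. y \<noteq> [] \<and> real (length y) \<le> 5 / \<alpha> * hdisc_star m q n \<and>
              (\<forall>i<m. \<bar>sq_eval (q i) x - sq_eval (q i) y\<bar> \<le> \<alpha>)"
  proof (intro exI[of _ y] conjI allI impI)
    show "y \<noteq> []" using y T by auto
    show "real (length y) \<le> 5 / \<alpha> * hdisc_star m q n"
    proof -
      have "length y = card T" using distinct_card[OF y(2)] y(1) by simp
      thus ?thesis using T(3) D_def by simp
    qed
    fix i assume i: "i < m"
    have e: "(if real n \<le> 5 / \<alpha> * D then 0 else \<alpha> - 3 * D / real n) \<le> \<alpha>"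
      using D0 assms(1) by auto
    show "\<bar>sq_eval (q i) x - sq_eval (q i) y\<bar> \<le> \<alpha>"
    proof -
      have "\<bar>avg q i (set x) - avg q i T\<bar> \<le> \<alpha>" using T(4) i e by (meson order_trans)
      thus ?thesis using y x by (simp add: sq_eval_avg)
    qed
  qed
qed

end
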